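(* Let $\ell\in\{1,\dots,L\}$ and assume the asymptotic quadratic-Lipschitz condition on $\mathcal G^{(\ell)}$. If $(Q_{1,n},Q_{2,n})\to(Q_1,Q_2)$ in $\mathcal S^+_{D_\ell}\times\mathcal S_{D_{\ell+1}}$, then $\liminf_{n\to\infty}I_\ell(Q_{2,n}\mid Q_{1,n})\ge I_\ell(Q_2\mid Q_1)$.
   Context: $\mathcal S^+_D$ denotes the symmetric positive semidefinite $D\times D$ real matrices, $\mathcal S_D$ the symmetric ones, $\sqrt Q$ the positive semidefinite square root, $\|\cdot\|_2$ the Euclidean norm and $\|\cdot\|_F$ the Frobenius norm. $\mathcal G^{(\ell)}:\mathbb R^{D_\ell}\to\mathcal S^+_{D_{\ell+1}}$ is a map. Asymptotic quadratic-Lipschitz condition: $\mathcal G^{(\ell)}$ is continuous and for every $\varepsilon>0$ there is $C_\varepsilon>0$ such that for all $z,z'\in\mathbb R^{D_\ell}$, $\|\mathcal G^{(\ell)}(z)-\mathcal G^{(\ell)}(z')\|_F\le C_\varepsilon[1+\|z-z'\|_2(\|z\|_2+\|z'\|_2)]+\varepsilon(\|z\|_2^2+\|z'\|_2^2)$. For $Q_1\in\mathcal S^+_{D_\ell}$, $Q_0\in\mathbb R^{D_{\ell+1}\times D_{\ell+1}}$: $M_\ell(Q_0\mid Q_1)=\mathbf E[\exp(\operatorname{tr}(Q_0^\top\mathcal G^{(\ell)}(\sqrt{Q_1}Z)))]$ with $Z\sim\mathcal N(\mathbf 0,\mathbf I_{D_\ell})$, and $I_\ell(Q_2\mid Q_1)=\sup_{Q_0\in\mathcal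 S_{D_{\ell+1}}}\{\operatorname{tr}(Q_0^\top Q_2)-\log M_\ell(Q_0\mid Q_1)\}$ for $Q_2\in\mathcal S_{D_{\ell+1}}$. *)

theory Defs
  imports "HOL-Analysis.Analysis" "HOL-Probability.Probability"
begin

definition sym_mats :: "(real^'n^'n) set" where
  "sym_mats = {A. transpose A = A}"

definition psd_mats :: "(real^'n^'n) set" where
  "psd_mats = {A. transpose A = A \<and> (\<forall>x. 0 \<le> x \<bullet> (A *v x))}"

text \<open>Positive semidefinite square root (unique for PSD arguments).\<close>
definition psd_sqrt :: "real^'n^'n \<Rightarrow> real^'n^'n" where
  "psd_sqrt Q = (THE S. S \<in> psd_mats \<and> S ** S = Q)"

definition frob_norm :: "real^'n^'m \<Rightarrow> real" where
  "frob_norm A = sqrt (\<Sum>i\<in>UNIV. \<Sum>j\<in>UNIV. (A $ i $ j)^2)"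

definition std_gauss :: "(real^'d) measure" where
  "std_gauss = density lborel
     (\<lambda>z. ennreal ((2 * pi) powr (- real CARD('d) / 2) * exp (- (norm z * norm z) / 2)))"

definition asym_quad_lipschitz :: "(real^'d \<Rightarrow> real^'e^'e) \<Rightarrow> bool" where
  "asym_quad_lipschitz G \<longleftrightarrow> continuous_on UNIV G \<and>
     (\<forall>\<epsilon>>0. \<exists>C>0. \<forall>z z'. frob_norm (G z - G z') \<le>
        C * (1 + norm (z - z') * (norm z + norm z')) + \<epsilon> * ((norm z)^2 + (norm z')^2))"

definition mgf_M :: "(real^'d \<Rightarrow> real^'e^'e) \<Rightarrow> real^'e^'e \<Rightarrow> real^'d^'d \<Rightarrow> ennreal" where
  "mgf_M G Q0 Q1 = (\<integral>\<^sup>+ z. ennreal (exp (trace (transpose Q0 ** G (psd_sqrt Q1 *v z)))) \<partial>std_gauss)"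

definition ereal_log :: "ennreal \<Rightarrow> ereal" where
  "ereal_log x = (if x = \<infinity> then \<infinity> else if x = 0 then -\<infinity> else ereal (ln (enn2real x)))"

definition rate_I :: "(real^'d \<Rightarrow> real^'e^'e) \<Rightarrow> real^'e^'e \<Rightarrow> real^'d^'d \<Rightarrow> ereal" where
  "rate_I G Q2 Q1 = (SUP Q0\<in>sym_mats. ereal (trace (transpose Q0 ** Q2)) - ereal_log (mgf_M G Q0 Q1))"

end

theory Submission
  imports Defs
begin

lemma gauss1_fin:
  fixes a :: real assumes a: "a > 0"
  shows "(\<integral>\<^sup>+ x. ennreal (exp (- a * x\<^sup>2)) \<partial>lborel) < \<infinity>"
proof -
  define \<sigma> where "\<sigma> = 1 / sqrt (2 * a)"
  have s: "\<sigma> > 0" using a by (simp add: \<sigma>_def)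
  have s2: "\<sigma>\<^sup>2 = 1 / (2 * a)" using a by (simp add: \<sigma>_def power_divide)
  have eq: "exp (- a * x\<^sup>2) = sqrt (2 * pi * \<sigma>\<^sup>2) * normal_density 0 \<sigma> x" for x
    using a s s2 by (simp add: normal_density_def field_simps)
  have "(\<integral>\<^sup>+ x. ennreal (exp (- a * x\<^sup>2)) \<partial>lborel)
      = (\<integral>\<^sup>+ x. ennreal (sqrt (2 * pi * \<sigma>\<^sup>2)) * ennreal (normal_density 0 \<sigma> x) \<partial>lborel)"
    by (intro nn_integral_cong, unfold eq) (simp add: ennreal_mult normal_density_nonneg)
  also have "\<dots> = ennreal (sqrt (2 * pi * \<sigma>\<^sup>2)) * (\<integral>\<^sup>+ x. ennreal (normal_density 0 \<sigma> x) \<partial>lborel)"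
    by (rule nn_integral_cmult) simp
  also have "(\<integral>\<^sup>+ x. ennreal (normal_density 0 \<sigma> x) \<partial>lborel) = 1"
  proof -
    interpret prob_space "density lborel (\<lambda>x. ennreal (normal_density 0 \<sigma> x))"
      by (rule prob_space_normal_density[OF s])
    have "emeasure (density lborel (\<lambda>x. ennreal (normal_density 0 \<sigma> x))) UNIV = 1"
      using emeasure_space_1 by simp
    then show ?thesis by (simp add: emeasure_density)
  qed
  finally show ?thesis by (simp add: ennreal_less_top)
qed

lemma gauss_fin:
  fixes a :: real assumes a: "a > 0"
  shows "(\<integral>\<^sup>+ z. ennreal (exp (- a * (norm z)\<^sup>2)) \<partial>(lborel :: ('a::euclidean_space) measure)) < \<infinity>"
proof -
  interpret P: product_sigma_finite "\<lambda>b::'a. lborel"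
    by (intro product_sigma_finite.intro sigma_finite_lborel)
  have meas: "(\<lambda>f. \<Sum>b\<in>Basis. f b *\<^sub>R b) \<in> (\<Pi>\<^sub>M b\<in>(Basis::'a set). lborel) \<rightarrow>\<^sub>M (borel :: 'a measure)"
    by measurable
  have nrm: "(norm (\<Sum>b\<in>Basis. f b *\<^sub>R b))\<^sup>2 = (\<Sum>b\<in>(Basis::'a set). (f b)\<^sup>2)" for f :: "'a \<Rightarrow> real"
  proof -
    have "(\<Sum>b\<in>Basis. f b *\<^sub>R b) \<bullet> (\<Sum>c\<in>Basis. f c *\<^sub>R c)
        = (\<Sum>b\<in>(Basis::'a set). \<Sum>c\<in>Basis. f b * f c * (b \<bullet> c))"
      apply (simp add: inner_sum_left inner_sum_right sum_distrib_left)
      apply (subst sum.swap)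
      apply (simp add: algebra_simps)
      done
    also have "\<dots> = (\<Sum>b\<in>(Basis::'a set). (f b)\<^sup>2)"
      by (simp add: inner_Basis if_distrib power2_eq_square cong: if_cong)
    finally show ?thesis by (simp add: power2_norm_eq_inner)
  qed
  have "(\<integral>\<^sup>+ z. ennreal (exp (- a * (norm z)\<^sup>2)) \<partial>(lborel :: 'a measure))
      = (\<integral>\<^sup>+ f. ennreal (exp (- a * (norm (\<Sum>b\<in>Basis. f b *\<^sub>R b))\<^sup>2)) \<partial>(\<Pi>\<^sub>M b\<in>(Basis::'a set). lborel))"
    by (subst lborel_eq) (rule nn_integral_distr[OF meas], measurable)
  also have "\<dots> = (\<integral>\<^sup>+ f. (\<Prod>b\<in>(Basis::'a set). ennreal (exp (- a * (f b)\<^sup>2))) \<partial>(\<Pi>\<^sub>M b\<in>(Basis::'a set). lborel))"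
    by (simp add: nrm sum_distrib_left exp_sum prod_ennreal)
  also have "\<dots> = (\<Prod>b\<in>(Basis::'a set). (\<integral>\<^sup>+ x. ennreal (exp (- a * x\<^sup>2)) \<partial>lborel))"
    by (rule P.product_nn_integral_prod) auto
  also have "\<dots> < \<infinity>"
    using gauss1_fin[OF a] by (simp add: less_top[symmetric] power_eq_top_ennreal_iff)
  finally show ?thesis .
qed

lemma sym_inner:
  fixes A :: "real^'n^'n"
  assumes "transpose A = A"
  shows "x \<bullet> (A *v y) = (A *v x) \<bullet> y"
proof -
  have "(A *v x) \<bullet> y = (transpose A *v x) \<bullet> y" using assms by simp
  also have "\<dots> = x \<bullet> (A *v y)" by (simp add: transpose_matrix_vector dot_lmul_matrix)
  finally show ?thesis by simp
qed

lemma sym_eigvec: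
  fixes A :: "real^'n^'n"
  assumes symA: "transpose A = A" and V: "subspace V" and inv: "\<And>x. x \<in> V \<Longrightarrow> A *v x \<in> V"
    and v: "v \<in> V" "v \<noteq> 0"
  shows "\<exists>x\<in>V. norm x = 1 \<and> (\<forall>y\<in>V. norm y = 1 \<longrightarrow> y \<bullet> (A *v y) \<le> x \<bullet> (A *v x))
            \<and> A *v x = (x \<bullet> (A *v x)) *\<^sub>R x"
proof -
  define K where "K = sphere (0::real^'n) 1 \<inter> V"
  have cK: "compact K" unfolding K_def
    by (intro compact_Int_closed compact_sphere closed_subspace V)
  have "(1 / norm v) *\<^sub>R v \<in> K" using v V by (simp add: K_def subspace_scale)
  then have neK: "K \<noteq> {}" by blast
  have cont: "continuous_on K (\<lambda>y. y \<bullet> (A *v y))"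
    by (intro continuous_intros continuous_on_compose2[OF matrix_vector_mult_linear_continuous_on]) auto
  obtain x where xK: "x \<in> K" and xmax: "\<And>y. y \<in> K \<Longrightarrow> y \<bullet> (A *v y) \<le> x \<bullet> (A *v x)"
    using continuous_attains_sup[OF cK neK cont] by blast
  have xV: "x \<in> V" and nx: "norm x = 1" using xK by (auto simp: K_def)
  define \<mu> where "\<mu> = x \<bullet> (A *v x)"
  define w where "w = A *v x - \<mu> *\<^sub>R x"
  have wV: "w \<in> V" unfolding w_def using xV inv V by (intro subspace_diff subspace_scale) auto
  have xx: "x \<bullet> x = 1" using nx by (simp add: dot_square_norm)
  have xw: "x \<bullet> w = 0" unfolding w_def \<mu>_def by (simp add: inner_diff_right xx)
  have wx: "w \<bullet> x = 0" using xw by (simp add: inner_commute)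
  have wAx: "w \<bullet> (A *v x) = w \<bullet> w"
  proof -
    have "A *v x = w + \<mu> *\<^sub>R x" by (simp add: w_def)
    then show ?thesis using xw by (simp add: inner_add_right inner_commute)
  qed
  have "w = 0"
  proof (rule ccontr)
    assume "w \<noteq> 0"
    then have ww: "w \<bullet> w > 0" by simp
    define \<beta> where "\<beta> = w \<bullet> (A *v w)"
    define t where "t = (w \<bullet> w) / (\<bar>\<beta>\<bar> + \<bar>\<mu>\<bar> * (w \<bullet> w) + 1)"
    have den: "\<bar>\<beta>\<bar> + \<bar>\<mu>\<bar> * (w \<bullet> w) + 1 > 0" using ww by (smt (verit) abs_ge_zero mult_nonneg_nonneg)
    have t0: "t > 0" unfolding t_def using ww den by simp
    define z where "z = x + t *\<^sub>R w"
    have zz: "z \<bullet> z = 1 + t\<^sup>2 * (w \<bullet> w)"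
      unfolding z_def by (simp add: inner_add_left inner_add_right xx xw wx power2_eq_square)
    have zpos: "z \<bullet> z > 0" using zz ww by (simp add: add_pos_nonneg)
    have fz: "z \<bullet> (A *v z) = \<mu> + 2 * t * (w \<bullet> w) + t\<^sup>2 * \<beta>"
    proof -
      have "x \<bullet> (A *v w) = w \<bullet> (A *v x)"
        using sym_inner[OF symA, of x w] by (simp add: inner_commute)
      then show ?thesis unfolding z_def
        by (simp add: matrix_vector_right_distrib matrix_vector_mult_scaleR inner_add_left
            inner_add_right wAx \<mu>_def \<beta>_def power2_eq_square algebra_simps)
    qed
    define y where "y = (1 / norm z) *\<^sub>R z"
    have nz: "norm z > 0" using zpos by simp
    have zV: "z \<in> V" unfolding z_def using xV wV V by (intro subspace_add subspace_scale) auto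
    have yK: "y \<in> K" unfolding K_def y_def using nz zV V
      by (auto intro!: subspace_scale)
    have fy: "y \<bullet> (A *v y) = (z \<bullet> (A *v z)) / (z \<bullet> z)"
      unfolding y_def by (simp add: matrix_vector_mult_scaleR dot_square_norm power2_eq_square)
    have "(z \<bullet> (A *v z)) / (z \<bullet> z) \<le> \<mu>" using xmax[OF yK] fy by (simp add: \<mu>_def)
    then have "z \<bullet> (A *v z) \<le> \<mu> * (z \<bullet> z)" using zpos by (simp add: divide_le_eq)
    then have "2 * t * (w \<bullet> w) + t\<^sup>2 * \<beta> \<le> \<mu> * t\<^sup>2 * (w \<bullet> w)"
      unfolding fz zz by (simp add: algebra_simps)
    then have "2 * t * (w \<bullet> w) \<le> t\<^sup>2 * (\<mu> * (w \<bullet> w) - \<beta>)" by (simp add: algebra_simps)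
    also have "\<dots> \<le> t\<^sup>2 * (\<bar>\<beta>\<bar> + \<bar>\<mu>\<bar> * (w \<bullet> w))"
    proof -
      have "\<mu> * (w \<bullet> w) \<le> \<bar>\<mu>\<bar> * (w \<bullet> w)" using ww by (intro mult_right_mono) auto
      then show ?thesis by (intro mult_left_mono) auto
    qed
    also have "\<dots> < t\<^sup>2 * (\<bar>\<beta>\<bar> + \<bar>\<mu>\<bar> * (w \<bullet> w) + 1)" using t0 by simp
    also have "\<dots> = t * (w \<bullet> w)" using den unfolding t_def by (simp add: power2_eq_square)
    finally have "2 * t * (w \<bullet> w) < t * (w \<bullet> w)" .
    then show False using t0 ww by (simp add: mult_pos_pos)
  qed
  then have "A *v x = \<mu> *\<^sub>R x" by (simp add: w_def)
  moreover have "\<forall>y\<in>V. norm y = 1 \<longrightarrow> y \<bullet> (A *v y) \<le> x \<bullet> (A *v x)"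
    using xmax by (auto simp: K_def)
  ultimately show ?thesis using xV nx by (auto simp: \<mu>_def)
qed

definition outer :: "real^'n \<Rightarrow> real^'n^'n" where
  "outer v = (\<chi> i j. v $ i * v $ j)"

lemma outer_mult: "outer v *v y = (v \<bullet> y) *\<^sub>R v"
  by (simp add: outer_def matrix_vector_mult_def inner_vec_def vec_eq_iff sum_distrib_left
      algebra_simps)

lemma transpose_outer: "transpose (outer v) = outer v"
  by (simp add: outer_def transpose_def vec_eq_iff)

lemma transpose_add_mat: "transpose (A + B) = transpose A + transpose (B::real^'n^'m)"
  by (simp add: transpose_def vec_eq_iff)

lemma transpose_diff_mat: "transpose (A - B) = transpose A - transpose (B::real^'n^'m)"
  by (simp add: transpose_def vec_eq_iff)

lemma psd_zero_form:
  fixes S :: "real^'n^'n"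
  assumes S: "S \<in> psd_mats" and x: "x \<bullet> (S *v x) = 0"
  shows "S *v x = 0"
proof -
  have symS: "transpose S = S" and pos: "\<And>z. 0 \<le> z \<bullet> (S *v z)" using S by (auto simp: psd_mats_def)
  have key: "y \<bullet> (S *v x) = 0" for y
  proof -
    define a where "a = y \<bullet> (S *v x)"
    define b where "b = y \<bullet> (S *v y)"
    have b0: "b \<ge> 0" using pos by (simp add: b_def)
    have xSy: "x \<bullet> (S *v y) = a" using sym_inner[OF symS, of x y] by (simp add: a_def inner_commute)
    have *: "0 \<le> 2 * t * a + t\<^sup>2 * b" for t
    proof -
      have "0 \<le> (x + t *\<^sub>R y) \<bullet> (S *v (x + t *\<^sub>R y))" by (rule pos)
      also have "\<dots> = 2 * t * a + t\<^sup>2 * b"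
        by (simp add: matrix_vector_right_distrib matrix_vector_mult_scaleR inner_add_left
            inner_add_right x xSy a_def[symmetric] b_def[symmetric] power2_eq_square algebra_simps)
      finally show ?thesis .
    qed
    have "0 \<le> 2 * (- a / (b + 1)) * a + (- a / (b + 1))\<^sup>2 * b" by (rule *)
    then have "0 \<le> (2 * (- a / (b + 1)) * a + (- a / (b + 1))\<^sup>2 * b) * (b + 1)\<^sup>2"
      by simp
    also have "\<dots> = - (a\<^sup>2 * (b + 2))"
    proof -
      have bp: "b + 1 \<noteq> 0" using b0 by simp
      have e1: "(2 * (- a / (b + 1)) * a) * (b + 1)\<^sup>2 = - 2 * a\<^sup>2 * (b + 1)"
        using bp by (simp add: power2_eq_square field_simps)
      have bp2: "(b + 1)\<^sup>2 \<noteq> 0" using bp by simp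
      have e2: "((- a / (b + 1))\<^sup>2 * b) * (b + 1)\<^sup>2 = a\<^sup>2 * b"
        using bp2 by (simp add: power_divide)
      show ?thesis by (simp only: distrib_right e1 e2) (simp add: algebra_simps)
    qed
    finally have "a\<^sup>2 * (b + 2) \<le> 0" by simp
    moreover have "b + 2 > 0" using b0 by simp
    ultimately have "a\<^sup>2 \<le> 0" by (simp add: mult_le_0_iff)
    then show ?thesis by (simp add: a_def)
  qed
  have "(S *v x) \<bullet> (S *v x) = 0" by (rule key)
  then show ?thesis by simp
qed

lemma psd_sqrt_exists_aux:
  fixes A :: "real^'n^'n"
  assumes symA: "transpose A = A" and posA: "\<And>x. 0 \<le> x \<bullet> (A *v x)"
  shows "subspace V \<Longrightarrow> dim V = k \<Longrightarrow> (\<And>x. x \<in> V \<Longrightarrow> A *v x \<in> V) \<Longrightarrow>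
    \<exists>S. transpose S = S \<and> (\<forall>x. 0 \<le> x \<bullet> (S *v x)) \<and> (\<forall>x\<in>V. S *v (S *v x) = A *v x)
        \<and> (\<forall>x. (\<forall>v\<in>V. v \<bullet> x = 0) \<longrightarrow> S *v x = 0)"
proof (induction k arbitrary: V rule: less_induct)
  case (less k)
  note V = less.prems(1) and inv = less.prems(3)
  show ?case
  proof (cases "\<exists>v\<in>V. v \<noteq> 0")
    case False
    then have "\<forall>x\<in>V. x = 0" by blast
    then have "\<forall>x\<in>V. (0::real^'n^'n) *v (0 *v x) = A *v x" by (metis matrix_vector_mult_0_right)
    moreover have "transpose (0::real^'n^'n) = 0" by (simp add: transpose_def vec_eq_iff)
    ultimately show ?thesis
      by (intro exI[of _ "0"]) simp
  next
    case True
    then obtain v where v: "v \<in> V" "v \<noteq> 0" by blast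
    obtain x where xV: "x \<in> V" and nx: "norm x = 1" and ev: "A *v x = (x \<bullet> (A *v x)) *\<^sub>R x"
      using sym_eigvec[OF symA V inv v] by blast
    define \<mu> where "\<mu> = x \<bullet> (A *v x)"
    have mu0: "\<mu> \<ge> 0" using posA by (simp add: \<mu>_def)
    have Ax: "A *v x = \<mu> *\<^sub>R x" using ev by (simp add: \<mu>_def)
    have xx: "x \<bullet> x = 1" using nx by (simp add: dot_square_norm)
    define V' where "V' = {y\<in>V. x \<bullet> y = 0}"
    have V'sub: "subspace V'"
      using V unfolding V'_def subspace_def by (auto simp: inner_add_right)
    have V'inv: "A *v y \<in> V'" if "y \<in> V'" for y
    proof -
      have "x \<bullet> (A *v y) = (A *v x) \<bullet> y" by (rule sym_inner[OF symA])
      also have "\<dots> = 0" using that by (simp add: Ax V'_def)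
      finally show ?thesis using that inv by (auto simp: V'_def)
    qed
    have "dim V' < dim V"
    proof (rule dim_psubset)
      have "x \<notin> V'" using xx by (simp add: V'_def)
      moreover have "V' \<subseteq> V" by (auto simp: V'_def)
      ultimately have "V' \<subset> V" using xV by blast
      then show "span V' \<subset> span V" using V V'sub by (simp add: span_eq_iff[THEN iffD2])
    qed
    then obtain S' where symS': "transpose S' = S'" and posS': "\<forall>z. 0 \<le> z \<bullet> (S' *v z)"
      and sqS': "\<forall>y\<in>V'. S' *v (S' *v y) = A *v y"
      and kerS': "\<forall>z. (\<forall>v\<in>V'. v \<bullet> z = 0) \<longrightarrow> S' *v z = 0"
      using less.IH[OF _ V'sub refl V'inv] less.prems(2) by blast
    have S'x: "S' *v x = 0" using kerS' by (auto simp: V'_def inner_commute)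
    define S where "S = S' + sqrt \<mu> *\<^sub>R outer x"
    have Sz: "S *v z = S' *v z + (sqrt \<mu> * (x \<bullet> z)) *\<^sub>R x" for z
      by (simp add: S_def matrix_vector_mult_add_rdistrib scaleR_matrix_vector_assoc[symmetric] outer_mult)
    have "transpose S = S"
      by (simp add: S_def transpose_add_mat transpose_scalar transpose_outer symS')
    moreover have "\<forall>z. 0 \<le> z \<bullet> (S *v z)"
    proof
      fix z
      have "z \<bullet> (S *v z) = z \<bullet> (S' *v z) + sqrt \<mu> * (x \<bullet> z)\<^sup>2"
        by (simp add: Sz inner_add_right inner_commute power2_eq_square)
      then show "0 \<le> z \<bullet> (S *v z)" using posS' mu0 by simp
    qed
    moreover have "\<forall>y\<in>V. S *v (S *v y) = A *v y"
    proof
      fix y assume yV: "y \<in> V"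
      define y' where "y' = y - (x \<bullet> y) *\<^sub>R x"
      have y'V': "y' \<in> V'" unfolding V'_def y'_def using yV xV V
        by (auto intro!: subspace_diff subspace_scale simp: inner_diff_right xx)
      have S'y: "S' *v y = S' *v y'" by (simp add: y'_def matrix_vector_mult_diff_distrib
          matrix_vector_mult_scaleR S'x)
      have xS'y: "x \<bullet> (S' *v y) = 0"
        using sym_inner[OF symS', of x y] by (simp add: S'x)
      have "S *v (S *v y) = S' *v (S' *v y) + (\<mu> * (x \<bullet> y)) *\<^sub>R x"
        using mu0 by (simp add: Sz matrix_vector_right_distrib matrix_vector_mult_scaleR S'x
            inner_add_right xS'y xx algebra_simps)
      also have "S' *v (S' *v y) = A *v y'" using S'y sqS' y'V' by simp
      also have "A *v y' = A *v y - (\<mu> * (x \<bullet> y)) *\<^sub>R x"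
        by (simp add: y'_def matrix_vector_mult_diff_distrib matrix_vector_mult_scaleR Ax)
      finally show "S *v (S *v y) = A *v y" by simp
    qed
    moreover have "\<forall>z. (\<forall>v\<in>V. v \<bullet> z = 0) \<longrightarrow> S *v z = 0"
    proof (intro allI impI)
      fix z assume h: "\<forall>v\<in>V. v \<bullet> z = 0"
      then have "S' *v z = 0" using kerS' by (auto simp: V'_def)
      moreover have "x \<bullet> z = 0" using h xV by blast
      ultimately show "S *v z = 0" by (simp add: Sz)
    qed
    ultimately show ?thesis by blast
  qed
qed

lemma psd_sqrt_exists:
  fixes A :: "real^'n^'n"
  assumes "A \<in> psd_mats"
  shows "\<exists>S\<in>psd_mats. S ** S = A"
proof -
  have symA: "transpose A = A" and posA: "\<And>x. 0 \<le> x \<bullet> (A *v x)" using assms by (auto simp: psd_mats_def)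
  obtain S where "transpose S = S" "\<forall>x. 0 \<le> x \<bullet> (S *v x)" "\<forall>x\<in>UNIV. S *v (S *v x) = A *v x"
    using psd_sqrt_exists_aux[OF symA posA subspace_UNIV refl] by blast
  then show ?thesis
    by (intro bexI[of _ S]) (auto simp: psd_mats_def matrix_eq matrix_vector_mul_assoc)
qed

lemma psd_sqrt_unique_aux:
  fixes S T :: "real^'n^'n"
  assumes S: "S \<in> psd_mats" and T: "T \<in> psd_mats" and eq: "S ** S = T ** T"
  shows "y \<bullet> ((S - T) *v y) \<le> 0"
proof -
  define D where "D = S - T"
  have symS: "transpose S = S" and symT: "transpose T = T" using S T by (auto simp: psd_mats_def)
  have posS: "\<And>z. 0 \<le> z \<bullet> (S *v z)" and posT: "\<And>z. 0 \<le> z \<bullet> (T *v z)"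
    using S T by (auto simp: psd_mats_def)
  have symD: "transpose D = D" by (simp add: D_def transpose_diff_mat symS symT)
  have sq: "S *v (S *v z) = T *v (T *v z)" for z
    using eq by (simp add: matrix_vector_mul_assoc)
  obtain x where nx: "norm x = 1" and xmax: "\<forall>y. norm y = 1 \<longrightarrow> y \<bullet> (D *v y) \<le> x \<bullet> (D *v x)"
    and ev: "D *v x = (x \<bullet> (D *v x)) *\<^sub>R x"
    using sym_eigvec[OF symD subspace_UNIV, of "axis undefined 1"] by (auto simp: axis_eq_0_iff)
  define \<mu> where "\<mu> = x \<bullet> (D *v x)"
  have Dx: "D *v x = \<mu> *\<^sub>R x" using ev by (simp add: \<mu>_def)
  have mu: "\<mu> \<le> 0"
  proof (rule ccontr)
    assume "\<not> \<mu> \<le> 0"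
    then have mpos: "\<mu> > 0" by simp
    have "S *v (D *v x) + D *v (T *v x) = S *v (S *v x) - T *v (T *v x)"
      by (simp add: D_def matrix_vector_mult_diff_distrib matrix_vector_mult_diff_rdistrib)
    then have "S *v (D *v x) + D *v (T *v x) = 0" by (simp add: sq)
    then have "x \<bullet> (S *v (D *v x)) + x \<bullet> (D *v (T *v x)) = 0"
      by (metis inner_add_right inner_zero_right)
    moreover have "x \<bullet> (D *v (T *v x)) = \<mu> * (x \<bullet> (T *v x))"
      using sym_inner[OF symD, of x "T *v x"] by (simp add: Dx)
    ultimately have "\<mu> * (x \<bullet> (S *v x)) + \<mu> * (x \<bullet> (T *v x)) = 0"
      by (simp add: Dx matrix_vector_mult_scaleR)
    then have "x \<bullet> (S *v x) + x \<bullet> (T *v x) = 0" using mpos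
      by (metis distrib_left mult_eq_0_iff order_less_irrefl)
    then have "x \<bullet> (S *v x) = 0" "x \<bullet> (T *v x) = 0" using posS[of x] posT[of x] by linarith+
    then have "S *v x = 0" "T *v x = 0" using psd_zero_form S T by blast+
    then have "D *v x = 0" by (simp add: D_def matrix_vector_mult_diff_rdistrib)
    then have "\<mu> *\<^sub>R x = 0" by (simp add: Dx)
    then show False using mpos nx by auto
  qed
  show ?thesis
  proof (cases "y = 0")
    case True then show ?thesis by simp
  next
    case False
    define u where "u = (1 / norm y) *\<^sub>R y"
    have "norm u = 1" using False by (simp add: u_def)
    then have "u \<bullet> (D *v u) \<le> 0" using xmax mu by (auto simp: \<mu>_def)
    moreover have "u \<bullet> (D *v u) = (y \<bullet> (D *v y)) / (norm y)\<^sup>2"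
      by (simp add: u_def matrix_vector_mult_scaleR power2_eq_square)
    ultimately have "(y \<bullet> (D *v y)) / (norm y)\<^sup>2 \<le> 0" by simp
    then show ?thesis using False by (simp add: D_def divide_le_0_iff)
  qed
qed

lemma psd_sqrt_unique:
  fixes S T :: "real^'n^'n"
  assumes S: "S \<in> psd_mats" and T: "T \<in> psd_mats" and eq: "S ** S = T ** T"
  shows "S = T"
proof -
  define D where "D = S - T"
  have symD: "transpose D = D" using S T by (simp add: D_def transpose_diff_mat psd_mats_def)
  have z: "y \<bullet> (D *v y) = 0" for y
  proof -
    have "y \<bullet> (D *v y) \<le> 0" using psd_sqrt_unique_aux[OF S T eq] by (simp add: D_def)
    moreover have "y \<bullet> ((T - S) *v y) \<le> 0" using psd_sqrt_unique_aux[OF T S eq[symmetric]] .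
    then have "y \<bullet> (D *v y) \<ge> 0"
      by (simp add: D_def matrix_vector_mult_diff_rdistrib inner_diff_right)
    ultimately show ?thesis by simp
  qed
  have "D *v x = 0" for x
  proof -
    let ?y = "D *v x"
    have "(x + ?y) \<bullet> (D *v (x + ?y)) = x \<bullet> (D *v x) + 2 * (?y \<bullet> (D *v x)) + ?y \<bullet> (D *v ?y)"
      using sym_inner[OF symD, of ?y x]
      by (simp add: matrix_vector_right_distrib inner_add_left inner_add_right inner_commute)
    then have "?y \<bullet> ?y = 0" using z by simp
    then show ?thesis by simp
  qed
  then show ?thesis by (simp add: D_def matrix_eq matrix_vector_mult_diff_rdistrib)
qed

lemma psd_sqrt_props:
  fixes Q :: "real^'n^'n"
  assumes "Q \<in> psd_mats"
  shows "psd_sqrt Q \<in> psd_mats \<and> psd_sqrt Q ** psd_sqrt Q = Q"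
proof -
  have "\<exists>!S. S \<in> psd_mats \<and> S ** S = Q"
    using psd_sqrt_exists[OF assms] psd_sqrt_unique by blast
  then show ?thesis unfolding psd_sqrt_def by (rule theI')
qed

lemma tendsto_matmul:
  fixes f g :: "'b \<Rightarrow> real^'n^'n"
  assumes "(f \<longlongrightarrow> A) F" "(g \<longlongrightarrow> B) F"
  shows "((\<lambda>x. f x ** g x) \<longlongrightarrow> A ** B) F"
  unfolding matrix_matrix_mult_def
  by (intro tendsto_vec_lambda tendsto_sum tendsto_mult tendsto_vec_nth assms)

lemma tendsto_matvec:
  fixes f :: "'b \<Rightarrow> real^'n^'m"
  assumes "(f \<longlongrightarrow> A) F"
  shows "((\<lambda>x. f x *v v) \<longlongrightarrow> A *v v) F"
  unfolding matrix_vector_mult_def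
  by (intro tendsto_vec_lambda tendsto_sum tendsto_mult tendsto_vec_nth assms tendsto_const)

lemma tendsto_transpose:
  fixes f :: "'b \<Rightarrow> real^'n^'m"
  assumes "(f \<longlongrightarrow> A) F"
  shows "((\<lambda>x. transpose (f x)) \<longlongrightarrow> transpose A) F"
  unfolding transpose_def
  by (intro tendsto_vec_lambda tendsto_vec_nth assms)

lemma psd_limit:
  fixes S :: "nat \<Rightarrow> real^'n^'n"
  assumes "\<And>n. S n \<in> psd_mats" "S \<longlonglongrightarrow> T"
  shows "T \<in> psd_mats"
proof -
  have "(\<lambda>n. transpose (S n)) \<longlonglongrightarrow> transpose T" by (rule tendsto_transpose[OF assms(2)])
  moreover have "(\<lambda>n. transpose (S n)) = S" using assms(1) by (auto simp: psd_mats_def)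
  ultimately have "S \<longlonglongrightarrow> transpose T" by simp
  then have "transpose T = T" using LIMSEQ_unique[OF _ assms(2)] by blast
  moreover have "0 \<le> x \<bullet> (T *v x)" for x
  proof (rule LIMSEQ_le_const)
    show "(\<lambda>n. x \<bullet> (S n *v x)) \<longlonglongrightarrow> x \<bullet> (T *v x)"
      by (intro tendsto_inner tendsto_const tendsto_matvec assms(2))
    show "\<exists>N. \<forall>n\<ge>N. 0 \<le> x \<bullet> (S n *v x)" using assms(1) by (auto simp: psd_mats_def)
  qed
  ultimately show ?thesis by (simp add: psd_mats_def)
qed

lemma norm_sq_sym:
  fixes S :: "real^'n^'n"
  assumes "transpose S = S"
  shows "(norm S)\<^sup>2 = trace (S ** S)"
proof -
  have s: "S $ k $ i = S $ i $ k" for i k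
    using assms by (metis transpose_def vec_lambda_beta)
  have "(norm S)\<^sup>2 = (\<Sum>i\<in>UNIV. \<Sum>k\<in>UNIV. S $ i $ k * S $ i $ k)"
    by (simp add: power2_norm_eq_inner inner_vec_def)
  also have "\<dots> = trace (S ** S)"
    by (simp add: trace_def matrix_matrix_mult_def s)
  finally show ?thesis .
qed

lemma trace_le_norm:
  fixes Q :: "real^'n^'n"
  shows "trace Q \<le> real CARD('n) * norm Q"
proof -
  have "trace Q \<le> (\<Sum>i\<in>(UNIV::'n set). norm Q)"
    unfolding trace_def
  proof (rule sum_mono)
    fix i :: 'n
    have "Q $ i $ i \<le> \<bar>Q $ i $ i\<bar>" by simp
    also have "\<dots> \<le> norm (Q $ i)" by (rule component_le_norm_cart)
    also have "\<dots> \<le> norm Q" by (rule Finite_Cartesian_Product.norm_nth_le)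
    finally show "Q $ i $ i \<le> norm Q" .
  qed
  then show ?thesis by simp
qed

lemma psd_sqrt_tendsto:
  fixes Q :: "nat \<Rightarrow> real^'n^'n"
  assumes Qpsd: "\<And>n. Q n \<in> psd_mats" and QL: "Q \<longlonglongrightarrow> L" and Lpsd: "L \<in> psd_mats"
  shows "(\<lambda>n. psd_sqrt (Q n)) \<longlonglongrightarrow> psd_sqrt L"
proof (rule ccontr)
  define S where "S = (\<lambda>n. psd_sqrt (Q n))"
  define P where "P = psd_sqrt L"
  have Spsd: "S n \<in> psd_mats" and Ssq: "S n ** S n = Q n" for n
    using psd_sqrt_props[OF Qpsd] by (auto simp: S_def)
  have Ppsd: "P \<in> psd_mats" and Psq: "P ** P = L"
    using psd_sqrt_props[OF Lpsd] by (auto simp: P_def)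
  obtain B where B: "\<And>n. norm (Q n) \<le> B"
    using convergent_imp_Bseq[OF convergentI[OF QL]] by (auto elim!: BseqE)
  have bS: "bounded (range S)"
  proof -
    have "norm (S n) \<le> sqrt (real CARD('n) * B)" for n
    proof -
      have "(norm (S n))\<^sup>2 = trace (Q n)"
        using norm_sq_sym[of "S n"] Spsd[of n] Ssq[of n] by (simp add: psd_mats_def)
      also have "\<dots> \<le> real CARD('n) * B"
      proof -
        have "real CARD('n) * norm (Q n) \<le> real CARD('n) * B" using B[of n] by (intro mult_left_mono) auto
        then show ?thesis using trace_le_norm[of "Q n"] by linarith
      qed
      finally show ?thesis by (simp add: real_le_rsqrt)
    qed
    then show ?thesis by (auto simp: bounded_iff)
  qed
  assume "\<not> (\<lambda>n. psd_sqrt (Q n)) \<longlonglongrightarrow> psd_sqrt L"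
  then have "\<not> S \<longlonglongrightarrow> P" by (simp add: S_def P_def)
  then obtain e where e: "e > 0" and ne: "\<not> eventually (\<lambda>n. dist (S n) P < e) sequentially"
    unfolding tendsto_iff by blast
  have "infinite {n. \<not> dist (S n) P < e}"
    using ne by (simp add: cofinite_eq_sequentially[symmetric] eventually_cofinite)
  then obtain r :: "nat \<Rightarrow> nat" where r: "strict_mono r" and rN: "\<And>k. \<not> dist (S (r k)) P < e"
    using infinite_enumerate by blast
  have "range (S \<circ> r) \<subseteq> range S" by auto
  then have "bounded (range (S \<circ> r))" using bS bounded_subset by blast
  then obtain T and r' :: "nat \<Rightarrow> nat" where r': "strict_mono r'" and conv: "(S \<circ> r \<circ> r') \<longlonglongrightarrow> T"
    using bounded_imp_convergent_subsequence[of "S \<circ> r"] by blast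
  have Tpsd: "T \<in> psd_mats" by (rule psd_limit[OF _ conv]) (simp add: Spsd)
  have h1: "(\<lambda>k. (S \<circ> r \<circ> r') k ** (S \<circ> r \<circ> r') k) \<longlonglongrightarrow> T ** T"
    by (intro tendsto_matmul conv)
  have h2: "(\<lambda>k. (S \<circ> r \<circ> r') k ** (S \<circ> r \<circ> r') k) = Q \<circ> (r \<circ> r')"
    by (simp add: fun_eq_iff Ssq)
  have sm: "strict_mono (r \<circ> r')" using r r' by (rule strict_mono_o)
  have hL: "(Q \<circ> (r \<circ> r')) \<longlonglongrightarrow> L" by (rule LIMSEQ_subseq_LIMSEQ[OF QL sm])
  have h3: "(Q \<circ> (r \<circ> r')) \<longlonglongrightarrow> T ** T" using h1 unfolding h2 .
  have TL: "T ** T = L" by (rule LIMSEQ_unique[OF h3 hL])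
  have "T = P" by (rule psd_sqrt_unique[OF Tpsd Ppsd]) (simp add: Psq TL)
  have h4: "(\<lambda>k. dist ((S \<circ> r \<circ> r') k) P) \<longlonglongrightarrow> dist T P"
    by (intro tendsto_dist conv tendsto_const)
  then have h5: "(\<lambda>k. dist ((S \<circ> r \<circ> r') k) P) \<longlonglongrightarrow> 0" using \<open>T = P\<close> by simp
  have h6: "\<exists>N. \<forall>k\<ge>N. e \<le> dist ((S \<circ> r \<circ> r') k) P" using rN by (simp add: not_less)
  have "e \<le> 0" by (rule LIMSEQ_le_const[OF h5 h6])
  then show False using e by simp
qed

lemma trace_inner:
  fixes Q0 X :: "real^'e^'e"
  shows "trace (transpose Q0 ** X) = Q0 \<bullet> X"
proof -
  have "trace (transpose Q0 ** X) = (\<Sum>i\<in>UNIV. \<Sum>k\<in>UNIV. Q0 $ k $ i * X $ k $ i)"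
    by (simp add: trace_def matrix_matrix_mult_def transpose_def)
  also have "\<dots> = (\<Sum>k\<in>UNIV. \<Sum>i\<in>UNIV. Q0 $ k $ i * X $ k $ i)" by (rule sum.swap)
  also have "\<dots> = Q0 \<bullet> X" by (simp add: inner_vec_def)
  finally show ?thesis .
qed

lemma frob_norm_eq: "frob_norm (X :: real^'n^'m) = norm X"
proof -
  have "(norm X)\<^sup>2 = (\<Sum>i\<in>UNIV. \<Sum>j\<in>UNIV. (X $ i $ j)\<^sup>2)"
    by (simp only: power2_norm_eq_inner inner_vec_def inner_real_def) (simp add: power2_eq_square)
  then have "sqrt ((norm X)\<^sup>2) = frob_norm X" unfolding frob_norm_def by simp
  then show ?thesis by simp
qed

lemma norm_matvec_le:
  fixes A :: "real^'n^'m"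
  shows "norm (A *v x) \<le> norm A * norm x"
proof -
  have c: "(A *v x) $ i = A $ i \<bullet> x" for i
    unfolding matrix_vector_mult_def inner_vec_def inner_real_def by simp
  have n1: "(norm (A *v x))\<^sup>2 = (\<Sum>i\<in>UNIV. (A $ i \<bullet> x)\<^sup>2)"
    unfolding power2_norm_eq_inner[of "A *v x"] inner_vec_def[of "A *v x"] c
    by (simp add: power2_eq_square)
  have n2: "(norm A)\<^sup>2 = (\<Sum>i\<in>UNIV. (norm (A $ i))\<^sup>2)"
    unfolding power2_norm_eq_inner[of A] inner_vec_def[of A] by (simp add: power2_norm_eq_inner)
  have "(\<Sum>i\<in>UNIV. (A $ i \<bullet> x)\<^sup>2) \<le> (\<Sum>i\<in>UNIV. (norm (A $ i))\<^sup>2 * (norm x)\<^sup>2)"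
  proof (rule sum_mono)
    fix i
    have "\<bar>A $ i \<bullet> x\<bar> \<le> norm (A $ i) * norm x" by (rule Cauchy_Schwarz_ineq2)
    then have "\<bar>A $ i \<bullet> x\<bar>\<^sup>2 \<le> (norm (A $ i) * norm x)\<^sup>2"
      by (rule power_mono) simp
    then show "(A $ i \<bullet> x)\<^sup>2 \<le> (norm (A $ i))\<^sup>2 * (norm x)\<^sup>2" by (simp add: power_mult_distrib)
  qed
  also have "\<dots> = (norm A)\<^sup>2 * (norm x)\<^sup>2" unfolding n2 by (rule sum_distrib_right[symmetric])
  finally have "(norm (A *v x))\<^sup>2 \<le> (norm A * norm x)\<^sup>2" unfolding n1 by (simp add: power_mult_distrib)
  then show ?thesis by (rule power2_le_imp_le) simp
qed

lemma std_gauss_meas[simp]: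
  "(f \<in> borel_measurable (std_gauss :: (real^'d) measure)) = (f \<in> borel_measurable borel)"
  by (simp add: std_gauss_def)

definition gdens :: "real^'d \<Rightarrow> real" where
  "gdens z = (2 * pi) powr (- real CARD('d) / 2) * exp (- (norm z * norm z) / 2)"

lemma gdens_pos: "gdens z > 0" by (simp add: gdens_def)

lemma gdens_meas[measurable]: "gdens \<in> borel_measurable borel"
  unfolding gdens_def by measurable

lemma nn_integral_std_gauss:
  fixes f :: "real^'d \<Rightarrow> ennreal"
  assumes "f \<in> borel_measurable borel"
  shows "(\<integral>\<^sup>+ z. f z \<partial>std_gauss) = (\<integral>\<^sup>+ z. ennreal (gdens z) * f z \<partial>lborel)"
  unfolding std_gauss_def gdens_def[symmetric]
  by (subst nn_integral_density) (use assms in auto)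

lemma std_gauss_exp_fin:
  fixes c :: real assumes c: "c < 1/2"
  shows "(\<integral>\<^sup>+ z. ennreal (exp (c * (norm z)\<^sup>2)) \<partial>(std_gauss :: (real^'d) measure)) < \<infinity>"
proof -
  define K :: real where "K = (2 * pi) powr (- real CARD('d) / 2)"
  have m: "(\<lambda>z::real^'d. ennreal (exp (c * (norm z)\<^sup>2))) \<in> borel_measurable borel" by measurable
  have "(\<integral>\<^sup>+ z. ennreal (exp (c * (norm z)\<^sup>2)) \<partial>(std_gauss :: (real^'d) measure))
      = (\<integral>\<^sup>+ z. ennreal (gdens (z::real^'d)) * ennreal (exp (c * (norm z)\<^sup>2)) \<partial>lborel)"
    using nn_integral_std_gauss[OF m] by simp
  also have "\<dots> = (\<integral>\<^sup>+ z. ennreal K * ennreal (exp (- (1/2 - c) * (norm (z::real^'d))\<^sup>2)) \<partial>lborel)"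
  proof (rule nn_integral_cong)
    fix z :: "real^'d"
    have "gdens z * exp (c * (norm z)\<^sup>2) = K * exp (- (1/2 - c) * (norm z)\<^sup>2)"
    proof -
      have "exp (- (1/2 - c) * (norm z)\<^sup>2) = exp (- (norm z * norm z) / 2 + c * (norm z)\<^sup>2)"
        by (rule arg_cong[where f=exp]) (simp add: power2_eq_square algebra_simps)
      also have "\<dots> = exp (- (norm z * norm z) / 2) * exp (c * (norm z)\<^sup>2)" by (rule exp_add)
      finally have "exp (- (1/2 - c) * (norm z)\<^sup>2) = exp (- (norm z * norm z) / 2) * exp (c * (norm z)\<^sup>2)" .
      then show ?thesis by (simp add: gdens_def K_def)
    qed
    then show "ennreal (gdens z) * ennreal (exp (c * (norm z)\<^sup>2)) = ennreal K * ennreal (exp (- (1/2 - c) * (norm z)\<^sup>2))"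
      by (simp add: ennreal_mult'[symmetric] gdens_def K_def)
  qed
  also have "\<dots> = ennreal K * (\<integral>\<^sup>+ z. ennreal (exp (- (1/2 - c) * (norm z)\<^sup>2)) \<partial>(lborel :: (real^'d) measure))"
    by (rule nn_integral_cmult) measurable
  also have "\<dots> < \<infinity>" using gauss_fin[where a="1/2 - c" and 'a="real^'d"] c by (simp add: ennreal_mult_less_top)
  finally show ?thesis .
qed

lemma std_gauss_pos:
  fixes f :: "real^'d \<Rightarrow> real"
  assumes f: "f \<in> borel_measurable borel" and pos: "\<And>z. f z > 0"
  shows "(\<integral>\<^sup>+ z. ennreal (f z) \<partial>std_gauss) > 0"
proof -
  have eq: "(\<integral>\<^sup>+ z. ennreal (f z) \<partial>std_gauss) = (\<integral>\<^sup>+ z. ennreal (gdens z) * ennreal (f z) \<partial>lborel)"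
  proof -
    have m: "(\<lambda>z. ennreal (f z)) \<in> borel_measurable borel" using f by measurable
    show ?thesis using nn_integral_std_gauss[OF m] by simp
  qed
  have "(\<integral>\<^sup>+ z. ennreal (gdens z) * ennreal (f z) \<partial>lborel) \<noteq> 0"
  proof
    assume "(\<integral>\<^sup>+ z. ennreal (gdens z) * ennreal (f z) \<partial>lborel) = 0"
    then have "AE z in lborel. ennreal (gdens z) * ennreal (f z) = 0"
      by (subst (asm) nn_integral_0_iff_AE) (use f in measurable)
    then have h: "AE z in lborel. ennreal (gdens (z::real^'d)) = 0" using pos by (simp add: less_le)
    have "AE z in (lborel :: (real^'d) measure). False"
    proof (rule eventually_mono[OF h])
      fix z :: "real^'d"
      have "gdens z > 0" by (rule gdens_pos)
      then show "ennreal (gdens z) = 0 \<Longrightarrow> False" by (simp add: ennreal_eq_0_iff)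
    qed
    then have "ae_filter (lborel :: (real^'d) measure) = bot" by (simp add: trivial_limit_def)
    then show False by (simp add: ae_filter_eq_bot_iff)
  qed
  then show ?thesis using eq by (simp add: zero_less_iff_neq_zero)
qed

lemma nn_integral_exp_convex:
  fixes u v :: "'a \<Rightarrow> real"
  assumes [measurable]: "u \<in> borel_measurable M" "v \<in> borel_measurable M" and t: "0 \<le> t" "t \<le> 1"
  shows "(\<integral>\<^sup>+ z. ennreal (exp (t * u z + (1 - t) * v z)) \<partial>M)
      \<le> ennreal t * (\<integral>\<^sup>+ z. ennreal (exp (u z)) \<partial>M) + ennreal (1 - t) * (\<integral>\<^sup>+ z. ennreal (exp (v z)) \<partial>M)"
proof -
  have "(\<integral>\<^sup>+ z. ennreal (exp (t * u z + (1 - t) * v z)) \<partial>M)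
      \<le> (\<integral>\<^sup>+ z. ennreal t * ennreal (exp (u z)) + ennreal (1 - t) * ennreal (exp (v z)) \<partial>M)"
  proof (rule nn_integral_mono)
    fix z
    have "exp (t * u z + (1 - t) * v z) \<le> t * exp (u z) + (1 - t) * exp (v z)"
      using convex_onD[OF exp_convex, of t "v z" "u z"] t by (simp add: algebra_simps)
    then show "ennreal (exp (t * u z + (1 - t) * v z)) \<le> ennreal t * ennreal (exp (u z)) + ennreal (1 - t) * ennreal (exp (v z))"
      using t by (simp add: ennreal_mult'[symmetric] ennreal_plus[symmetric] del: ennreal_plus)
  qed
  also have "\<dots> = ennreal t * (\<integral>\<^sup>+ z. ennreal (exp (u z)) \<partial>M) + ennreal (1 - t) * (\<integral>\<^sup>+ z. ennreal (exp (v z)) \<partial>M)"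
    by (simp add: nn_integral_add nn_integral_cmult)
  finally show ?thesis .
qed

lemma dom_arith:
  fixes q t C \<delta> \<epsilon> K a dx nx ny F c :: real
  assumes q: "0 \<le> q" and t: "0 < t" and C: "0 < C" and d: "0 \<le> \<delta>" and e: "0 \<le> \<epsilon>" and K: "0 < K"
    and a: "0 \<le> a" and dx: "dx \<le> \<delta> * a" "0 \<le> dx" and nx: "0 \<le> nx" "nx \<le> K * a"
    and ny: "0 \<le> ny" "ny \<le> K * a"
    and F: "F \<le> C * (1 + dx * (nx + ny)) + \<epsilon> * (nx\<^sup>2 + ny\<^sup>2)"
    and c1: "t * q * (2 * C * K * \<delta>) \<le> c / 2" and c2: "t * q * (2 * \<epsilon> * K\<^sup>2) \<le> c / 2"
  shows "t * q * F \<le> t * q * C + c * a\<^sup>2"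
proof -
  have "dx * (nx + ny) \<le> (\<delta> * a) * (2 * K * a)"
    using dx nx ny by (intro mult_mono) auto
  then have "C * (dx * (nx + ny)) \<le> C * ((\<delta> * a) * (2 * K * a))" using C by simp
  moreover have "nx\<^sup>2 \<le> (K * a)\<^sup>2" "ny\<^sup>2 \<le> (K * a)\<^sup>2" using nx ny by (auto intro: power_mono)
  then have "\<epsilon> * (nx\<^sup>2 + ny\<^sup>2) \<le> \<epsilon> * (2 * (K * a)\<^sup>2)" using e by (intro mult_left_mono) auto
  ultimately have F2: "F \<le> C + (2 * C * K * \<delta>) * a\<^sup>2 + (2 * \<epsilon> * K\<^sup>2) * a\<^sup>2"
    using F by (simp add: algebra_simps power2_eq_square)
  have tq: "0 \<le> t * q" using t q by simp
  have "t * q * F \<le> t * q * (C + (2 * C * K * \<delta>) * a\<^sup>2 + (2 * \<epsilon> * K\<^sup>2) * a\<^sup>2)"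
    by (rule mult_left_mono[OF F2 tq])
  also have "\<dots> = t * q * C + (t * q * (2 * C * K * \<delta>)) * a\<^sup>2 + (t * q * (2 * \<epsilon> * K\<^sup>2)) * a\<^sup>2"
    by (simp add: algebra_simps)
  also have "\<dots> \<le> t * q * C + (c / 2) * a\<^sup>2 + (c / 2) * a\<^sup>2"
    using c1 c2 q C t a by (intro add_mono mult_right_mono) auto
  also have "\<dots> = t * q * C + c * a\<^sup>2" by simp
  finally show ?thesis .
qed

lemma cont_inner:
  fixes G :: "real^'d \<Rightarrow> real^'e^'e" and A :: "real^'d^'d"
  assumes "continuous_on UNIV G"
  shows "continuous_on UNIV (\<lambda>z. Q0 \<bullet> G (A *v z))"
  by (intro continuous_intros continuous_on_compose2[OF assms matrix_vector_mult_linear_continuous_on]) auto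

lemma cont_integrand:
  fixes G :: "real^'d \<Rightarrow> real^'e^'e" and A :: "real^'d^'d"
  assumes "continuous_on UNIV G"
  shows "continuous_on UNIV (\<lambda>z. exp (t * (Q0 \<bullet> G (A *v z))))"
  by (intro continuous_intros continuous_on_compose2[OF assms matrix_vector_mult_linear_continuous_on]) auto

lemma meas_integrand[measurable]:
  fixes G :: "real^'d \<Rightarrow> real^'e^'e" and A :: "real^'d^'d"
  assumes "continuous_on UNIV G"
  shows "(\<lambda>z. ennreal (exp (t * (Q0 \<bullet> G (A *v z))))) \<in> borel_measurable borel"
proof -
  have [measurable]: "(\<lambda>z. exp (t * (Q0 \<bullet> G (A *v z)))) \<in> borel_measurable borel"
    by (rule borel_measurable_continuous_onI[OF cont_integrand[OF assms]])
  show ?thesis by measurable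
qed

lemma mgf_scaled_bound:
  fixes G :: "real^'d \<Rightarrow> real^'e^'e" and A :: "real^'d^'d"
  assumes cG: "continuous_on UNIV G" and t: "0 \<le> t" "t \<le> 1"
  shows "(\<integral>\<^sup>+ z. ennreal (exp (t * (Q0 \<bullet> G (A *v z)))) \<partial>std_gauss)
     \<le> ennreal t * (\<integral>\<^sup>+ z. ennreal (exp (Q0 \<bullet> G (A *v z))) \<partial>std_gauss) + ennreal (1 - t) * emeasure (std_gauss :: (real^'d) measure) UNIV"
proof -
  have m: "(\<lambda>z. Q0 \<bullet> G (A *v z)) \<in> borel_measurable (std_gauss :: (real^'d) measure)"
    using borel_measurable_continuous_onI[OF cont_inner[OF cG, of Q0 A]] by simp
  have "(\<integral>\<^sup>+ z. ennreal (exp (t * (Q0 \<bullet> G (A *v z)))) \<partial>std_gauss)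
      = (\<integral>\<^sup>+ z. ennreal (exp (t * (Q0 \<bullet> G (A *v z)) + (1 - t) * (\<lambda>_. 0) z)) \<partial>std_gauss)" by simp
  also have "\<dots> \<le> ennreal t * (\<integral>\<^sup>+ z. ennreal (exp (Q0 \<bullet> G (A *v z))) \<partial>std_gauss)
      + ennreal (1 - t) * (\<integral>\<^sup>+ z. ennreal (exp ((\<lambda>_. 0) (z::real^'d))) \<partial>std_gauss)"
    using nn_integral_exp_convex[where v="\<lambda>_. 0", OF m _ t] by simp
  also have "(\<integral>\<^sup>+ z. ennreal (exp ((\<lambda>_. 0::real) (z::real^'d))) \<partial>std_gauss) = emeasure (std_gauss :: (real^'d) measure) UNIV"
    by (simp add: std_gauss_def)
  finally show ?thesis .
qed

lemma sets_std_gauss[measurable_cong]: "sets (std_gauss :: (real^'d) measure) = sets borel"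
  by (simp add: std_gauss_def)

lemma mgf_tendsto:
  fixes G :: "real^'d \<Rightarrow> real^'e^'e" and A :: "nat \<Rightarrow> real^'d^'d" and A0 :: "real^'d^'d"
  assumes lip: "asym_quad_lipschitz G" and AA: "A \<longlonglongrightarrow> A0"
    and fin: "(\<integral>\<^sup>+ z. ennreal (exp (Q0 \<bullet> G (A0 *v z))) \<partial>std_gauss) < \<infinity>"
    and t: "0 < t" "t < 1"
  shows "(\<lambda>n. \<integral>\<^sup>+ z. ennreal (exp (t * (Q0 \<bullet> G (A n *v z)))) \<partial>std_gauss)
           \<longlonglongrightarrow> (\<integral>\<^sup>+ z. ennreal (exp (t * (Q0 \<bullet> G (A0 *v z)))) \<partial>std_gauss)"
proof -
  have cG: "continuous_on UNIV G"
    and L: "\<And>\<epsilon>. \<epsilon> > 0 \<Longrightarrow> \<exists>C>0. \<forall>z z'. frob_norm (G z - G z') \<le>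
        C * (1 + norm (z - z') * (norm z + norm z')) + \<epsilon> * ((norm z)\<^sup>2 + (norm z')\<^sup>2)"
    using lip unfolding asym_quad_lipschitz_def by auto
  define q where "q = norm Q0"
  have q0: "q \<ge> 0" by (simp add: q_def)
  obtain K0 where K0: "\<And>n. norm (A n) \<le> K0"
    using convergent_imp_Bseq[OF convergentI[OF AA]] by (auto elim!: BseqE)
  define K where "K = max K0 (norm A0) + 1"
  have KA: "norm (A n) \<le> K" for n using K0[of n] by (simp add: K_def)
  have KA0: "norm A0 \<le> K" by (simp add: K_def)
  have "norm A0 < K" by (simp add: K_def)
  then have Kpos: "K > 0" using norm_ge_zero[of A0] by linarith
  define c where "c = (1 - t) / 4"
  have cpos: "c > 0" using t by (simp add: c_def)
  define \<epsilon> where "\<epsilon> = c / (4 * t * (q + 1) * K\<^sup>2)"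
  have epos: "\<epsilon> > 0" using cpos t q0 Kpos by (simp add: \<epsilon>_def)
  obtain C where Cpos: "C > 0" and CL: "\<And>z z'. frob_norm (G z - G z') \<le>
        C * (1 + norm (z - z') * (norm z + norm z')) + \<epsilon> * ((norm z)\<^sup>2 + (norm z')\<^sup>2)"
    using L[OF epos] by blast
  define \<eta> where "\<eta> = c / (4 * t * (q + 1) * C * K)"
  have etapos: "\<eta> > 0" using cpos t q0 Kpos Cpos by (simp add: \<eta>_def)
  have "eventually (\<lambda>n. dist (A n) A0 < \<eta>) sequentially"
    using AA etapos by (simp add: tendsto_iff)
  then obtain N where N: "\<And>n. n \<ge> N \<Longrightarrow> norm (A n - A0) < \<eta>"
    by (auto simp: eventually_sequentially dist_norm)
  have qq: "q / (q + 1) \<le> 1" using q0 by simp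
  have c1: "t * q * (2 * C * K * \<delta>) \<le> c / 2" if "0 \<le> \<delta>" "\<delta> \<le> \<eta>" for \<delta>
  proof -
    have "t * q * (2 * C * K * \<delta>) \<le> t * q * (2 * C * K * \<eta>)"
      using that t q0 Cpos Kpos by (intro mult_left_mono) auto
    also have "\<dots> = (c / 2) * (q / (q + 1))"
    proof -
      have "q + 1 \<noteq> 0" "t \<noteq> 0" "C \<noteq> 0" "K \<noteq> 0" using q0 t Cpos Kpos by auto
      then show ?thesis by (simp add: \<eta>_def divide_simps)
    qed
    also have "\<dots> \<le> c / 2" using qq cpos q0 by (simp add: mult_le_cancel_left1 divide_le_eq)
    finally show ?thesis .
  qed
  have c2: "t * q * (2 * \<epsilon> * K\<^sup>2) \<le> c / 2"
  proof -
    have "t * q * (2 * \<epsilon> * K\<^sup>2) = (c / 2) * (q / (q + 1))"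
    proof -
      have "q + 1 \<noteq> 0" "t \<noteq> 0" "K \<noteq> 0" using q0 t Kpos by auto
      then show ?thesis by (simp add: \<epsilon>_def divide_simps)
    qed
    also have "\<dots> \<le> c / 2" using qq cpos q0 by (simp add: divide_le_eq)
    finally show ?thesis .
  qed
  define u where "u = (\<lambda>z. Q0 \<bullet> G (A0 *v z))"
  define v where "v = (\<lambda>z::real^'d. (1/4) * (norm z)\<^sup>2)"
  have [measurable]: "u \<in> borel_measurable borel"
    unfolding u_def by (rule borel_measurable_continuous_onI[OF cont_inner[OF cG]])
  have [measurable]: "v \<in> borel_measurable borel" unfolding v_def by measurable
  define w where "w = (\<lambda>z. ennreal (exp (t * q * C)) * ennreal (exp (t * u z + (1 - t) * v z)))"
  have wm[measurable]: "w \<in> borel_measurable borel" unfolding w_def by measurable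
  have bound: "ennreal (exp (t * (Q0 \<bullet> G (A n *v z)))) \<le> w z" if n: "n \<ge> N" for n z
  proof -
    define x where "x = A n *v z"
    define y where "y = A0 *v z"
    define \<delta> where "\<delta> = norm (A n - A0)"
    have d0: "0 \<le> \<delta>" and dle: "\<delta> \<le> \<eta>" using N[OF n] by (auto simp: \<delta>_def)
    have dx: "norm (x - y) \<le> \<delta> * norm z"
    proof -
      have "x - y = (A n - A0) *v z" by (simp add: x_def y_def matrix_vector_mult_diff_rdistrib)
      then show ?thesis using norm_matvec_le[of "A n - A0" z] by (simp add: \<delta>_def)
    qed
    have nx: "norm x \<le> K * norm z"
      using norm_matvec_le[of "A n" z] KA[of n] by (simp add: x_def) (meson mult_right_mono norm_ge_zero order_trans)
    have ny: "norm y \<le> K * norm z"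
      using norm_matvec_le[of A0 z] KA0 by (simp add: y_def) (meson mult_right_mono norm_ge_zero order_trans)
    define F where "F = norm (G x - G y)"
    have F: "F \<le> C * (1 + norm (x - y) * (norm x + norm y)) + \<epsilon> * ((norm x)\<^sup>2 + (norm y)\<^sup>2)"
      using CL[of x y] by (simp add: F_def frob_norm_eq)
    have ar: "t * q * F \<le> t * q * C + c * (norm z)\<^sup>2"
      by (rule dom_arith[OF q0 t(1) Cpos d0 less_imp_le[OF epos] Kpos norm_ge_zero dx norm_ge_zero
            norm_ge_zero nx norm_ge_zero ny F c1[OF d0 dle] c2])
    have "Q0 \<bullet> G x - Q0 \<bullet> G y = Q0 \<bullet> (G x - G y)" by (simp add: inner_diff_right)
    also have "\<dots> \<le> q * F" unfolding q_def F_def by (rule norm_cauchy_schwarz)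
    finally have "Q0 \<bullet> G x \<le> Q0 \<bullet> G y + q * F" by simp
    then have "t * (Q0 \<bullet> G x) \<le> t * (Q0 \<bullet> G y + q * F)" using t by (intro mult_left_mono) auto
    then have "t * (Q0 \<bullet> G x) \<le> t * (Q0 \<bullet> G y) + t * (q * F)" by (simp add: distrib_left)
    also have "\<dots> \<le> t * (Q0 \<bullet> G y) + (t * q * C + c * (norm z)\<^sup>2)" using ar by simp
    also have "\<dots> = t * q * C + (t * u z + (1 - t) * v z)"
      by (simp add: u_def y_def v_def c_def algebra_simps)
    finally have "exp (t * (Q0 \<bullet> G x)) \<le> exp (t * q * C) * exp (t * u z + (1 - t) * v z)"
      by (simp add: exp_add[symmetric])
    then show ?thesis by (simp add: w_def x_def ennreal_mult'[symmetric])
  qed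
  have wfin: "(\<integral>\<^sup>+ z. w z \<partial>std_gauss) < \<infinity>"
  proof -
    have "(\<integral>\<^sup>+ z. w z \<partial>std_gauss) = ennreal (exp (t * q * C)) * (\<integral>\<^sup>+ z. ennreal (exp (t * u z + (1 - t) * v z)) \<partial>std_gauss)"
      unfolding w_def by (rule nn_integral_cmult) measurable
    also have "\<dots> \<le> ennreal (exp (t * q * C)) * (ennreal t * (\<integral>\<^sup>+ z. ennreal (exp (u z)) \<partial>std_gauss)
        + ennreal (1 - t) * (\<integral>\<^sup>+ z. ennreal (exp (v z)) \<partial>std_gauss))"
      using t by (intro mult_left_mono nn_integral_exp_convex) auto
    also have "\<dots> < \<infinity>"
    proof -
      have "(\<integral>\<^sup>+ z. ennreal (exp (u z)) \<partial>std_gauss) < \<infinity>" using fin by (simp add: u_def)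
      moreover have "(\<integral>\<^sup>+ z. ennreal (exp (v z)) \<partial>(std_gauss :: (real^'d) measure)) < \<infinity>"
        unfolding v_def by (rule std_gauss_exp_fin) simp
      ultimately show ?thesis by (simp add: ennreal_mult_less_top)
    qed
    finally show ?thesis .
  qed
  have "(\<lambda>i. \<integral>\<^sup>+ z. ennreal (exp (t * (Q0 \<bullet> G (A (i + N) *v z)))) \<partial>std_gauss)
           \<longlonglongrightarrow> (\<integral>\<^sup>+ z. ennreal (exp (t * (Q0 \<bullet> G (A0 *v z)))) \<partial>std_gauss)"
  proof (rule nn_integral_dominated_convergence)
    show "\<And>i. (\<lambda>z. ennreal (exp (t * (Q0 \<bullet> G (A (i + N) *v z))))) \<in> borel_measurable std_gauss"
      using meas_integrand[OF cG] by simp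
    show "(\<lambda>z. ennreal (exp (t * (Q0 \<bullet> G (A0 *v z))))) \<in> borel_measurable std_gauss"
      using meas_integrand[OF cG] by simp
    show "w \<in> borel_measurable std_gauss" by simp
    show "\<And>j. AE z in std_gauss. ennreal (exp (t * (Q0 \<bullet> G (A (j + N) *v z)))) \<le> w z"
      using bound by (intro AE_I2) simp
    show "(\<integral>\<^sup>+ z. w z \<partial>std_gauss) < \<infinity>" by (rule wfin)
    show "AE z in std_gauss. (\<lambda>i. ennreal (exp (t * (Q0 \<bullet> G (A (i + N) *v z)))))
            \<longlonglongrightarrow> ennreal (exp (t * (Q0 \<bullet> G (A0 *v z))))"
    proof (intro AE_I2)
      fix z :: "real^'d"
      have "(\<lambda>i. A (i + N)) \<longlonglongrightarrow> A0" using AA by (rule LIMSEQ_ignore_initial_segment)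
      then have "(\<lambda>i. A (i + N) *v z) \<longlonglongrightarrow> A0 *v z" by (rule tendsto_matvec)
      moreover have "isCont G (A0 *v z)" using cG by (simp add: continuous_on_eq_continuous_at)
      ultimately have "(\<lambda>i. G (A (i + N) *v z)) \<longlonglongrightarrow> G (A0 *v z)"
        using isCont_tendsto_compose by blast
      then show "(\<lambda>i. ennreal (exp (t * (Q0 \<bullet> G (A (i + N) *v z)))))
            \<longlonglongrightarrow> ennreal (exp (t * (Q0 \<bullet> G (A0 *v z))))"
        by (intro tendsto_ennrealI tendsto_exp tendsto_mult tendsto_const tendsto_inner)
    qed
  qed
  then show ?thesis by (rule LIMSEQ_offset)
qed

lemma mgf_eq1:
  fixes G :: "real^'d \<Rightarrow> real^'e^'e"
  shows "mgf_M G (t *\<^sub>R Q0) Q = (\<integral>\<^sup>+ z. ennreal (exp (t * (Q0 \<bullet> G (psd_sqrt Q *v z)))) \<partial>std_gauss)"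
  by (simp add: mgf_M_def trace_inner)

lemma mgf_eq0:
  fixes G :: "real^'d \<Rightarrow> real^'e^'e"
  shows "mgf_M G Q0 Q = (\<integral>\<^sup>+ z. ennreal (exp (Q0 \<bullet> G (psd_sqrt Q *v z))) \<partial>std_gauss)"
  by (simp add: mgf_M_def trace_inner)

lemma mgf_pos:
  fixes G :: "real^'d \<Rightarrow> real^'e^'e"
  assumes cG: "continuous_on UNIV G"
  shows "mgf_M G Q0 Q > 0"
proof -
  have "(\<lambda>z. exp (1 * (Q0 \<bullet> G (psd_sqrt Q *v z)))) \<in> borel_measurable borel"
    by (rule borel_measurable_continuous_onI[OF cont_integrand[OF cG]])
  then have "(\<integral>\<^sup>+ z. ennreal (exp (Q0 \<bullet> G (psd_sqrt Q *v z))) \<partial>std_gauss) > 0"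
    by (intro std_gauss_pos) auto
  then show ?thesis by (simp add: mgf_eq0)
qed

lemma term_le_liminf:
  fixes G :: "real^'d \<Rightarrow> real^'e^'e"
    and Q1n :: "nat \<Rightarrow> real^'d^'d" and Q2n :: "nat \<Rightarrow> real^'e^'e"
    and Q1 :: "real^'d^'d" and Q2 :: "real^'e^'e"
  assumes G_lip: "asym_quad_lipschitz G"
    and Q1n_psd: "\<And>n. Q1n n \<in> psd_mats"
    and Q1_psd: "Q1 \<in> psd_mats"
    and conv1: "Q1n \<longlonglongrightarrow> Q1" and conv2: "Q2n \<longlonglongrightarrow> Q2"
    and Q0: "Q0 \<in> sym_mats"
  shows "ereal (trace (transpose Q0 ** Q2)) - ereal_log (mgf_M G Q0 Q1)
          \<le> liminf (\<lambda>n. rate_I G (Q2n n) (Q1n n))"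
proof -
  define L where "L = liminf (\<lambda>n. rate_I G (Q2n n) (Q1n n))"
  have cG: "continuous_on UNIV G" using G_lip by (simp add: asym_quad_lipschitz_def)
  define S where "S = (\<lambda>n. psd_sqrt (Q1n n))"
  define S0 where "S0 = psd_sqrt Q1"
  have SS: "S \<longlonglongrightarrow> S0" unfolding S_def S0_def by (rule psd_sqrt_tendsto[OF Q1n_psd conv1 Q1_psd])
  define \<mu> where "\<mu> = emeasure (std_gauss :: (real^'d) measure) UNIV"
  have mufin: "\<mu> < \<infinity>"
  proof -
    have "(\<integral>\<^sup>+ z. ennreal (exp (0 * (norm z)\<^sup>2)) \<partial>(std_gauss :: (real^'d) measure)) < \<infinity>"
      by (rule std_gauss_exp_fin) simp
    then show ?thesis by (simp add: \<mu>_def std_gauss_def)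
  qed
  define \<mu>r where "\<mu>r = enn2real \<mu>"
  have mu_eq: "\<mu> = ennreal \<mu>r" using mufin by (simp add: \<mu>r_def less_top)
  have mur0: "\<mu>r \<ge> 0" by (simp add: \<mu>r_def)
  show ?thesis
  proof (cases "mgf_M G Q0 Q1 = \<infinity>")
    case True
    then show ?thesis by (simp add: ereal_log_def)
  next
    case False
    define m where "m = enn2real (mgf_M G Q0 Q1)"
    have Mpos: "mgf_M G Q0 Q1 > 0" by (rule mgf_pos[OF cG])
    have M_eq: "mgf_M G Q0 Q1 = ennreal m" using False by (simp add: m_def less_top)
    have mpos: "m > 0" using Mpos M_eq by simp
    have lhs: "ereal (trace (transpose Q0 ** Q2)) - ereal_log (mgf_M G Q0 Q1) = ereal (Q0 \<bullet> Q2 - ln m)"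
      using M_eq mpos by (simp add: ereal_log_def trace_inner)
    define g where "g = (\<lambda>t. t * (Q0 \<bullet> Q2) - ln (t * m + (1 - t) * \<mu>r))"
    have gle: "ereal (g t) \<le> L" if t: "0 < t" "t < 1" for t
    proof -
      define a where "a = (\<lambda>n. mgf_M G (t *\<^sub>R Q0) (Q1n n))"
      define a0 where "a0 = mgf_M G (t *\<^sub>R Q0) Q1"
      have fin: "(\<integral>\<^sup>+ z. ennreal (exp (Q0 \<bullet> G (S0 *v z))) \<partial>std_gauss) < \<infinity>"
        using False by (simp add: mgf_eq0 S0_def less_top)
      have aconv: "a \<longlonglongrightarrow> a0"
        unfolding a_def a0_def mgf_eq1 S0_def[symmetric]
        using mgf_tendsto[OF G_lip SS fin t] by (simp add: S_def)
      have a0le: "a0 \<le> ennreal t * ennreal m + ennreal (1 - t) * \<mu>"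
        unfolding a0_def mgf_eq1 using mgf_scaled_bound[OF cG, of t Q0 "psd_sqrt Q1"] t
        by (simp add: mgf_eq0[symmetric] M_eq \<mu>_def)
      have bnd: "ennreal t * ennreal m + ennreal (1 - t) * \<mu> = ennreal (t * m + (1 - t) * \<mu>r)"
        using t mpos mur0 by (simp add: mu_eq ennreal_mult'[symmetric] ennreal_plus[symmetric] del: ennreal_plus)
      have a0pos: "a0 > 0" unfolding a0_def by (rule mgf_pos[OF cG])
      have a0le': "a0 \<le> ennreal (t * m + (1 - t) * \<mu>r)" using a0le bnd by simp
      have a0fin: "a0 < \<infinity>" using le_less_trans[OF a0le' ennreal_less_top] by simp
      define \<alpha> where "\<alpha> = enn2real a0"
      have a0_eq: "a0 = ennreal \<alpha>" using a0fin by (simp add: \<alpha>_def less_top)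
      have alpos: "\<alpha> > 0" using a0pos a0_eq by simp
      have b0: "0 \<le> t * m + (1 - t) * \<mu>r" using t mpos mur0 by simp
      have "ennreal \<alpha> \<le> ennreal (t * m + (1 - t) * \<mu>r)" using a0le' a0_eq by simp
      then have alle: "\<alpha> \<le> t * m + (1 - t) * \<mu>r" using b0 by (simp add: ennreal_le_iff)
      have ev_fin: "eventually (\<lambda>n. a n < \<infinity>) sequentially"
        using order_tendstoD(2)[OF aconv a0fin] .
      have ev_pos: "eventually (\<lambda>n. 0 < a n) sequentially"
        using order_tendstoD(1)[OF aconv a0pos] .
      have rconv: "(\<lambda>n. enn2real (a n)) \<longlonglongrightarrow> \<alpha>"
        using tendsto_enn2real[of a \<alpha>] aconv a0_eq alpos by simp
      define T where "T = (\<lambda>n. ereal (trace (transpose (t *\<^sub>R Q0) ** Q2n n)) - ereal_log (a n))"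
      have Tle: "T n \<le> rate_I G (Q2n n) (Q1n n)" for n
      proof -
        have "t *\<^sub>R Q0 \<in> sym_mats" using Q0 by (simp add: sym_mats_def transpose_scalar)
        then show ?thesis unfolding T_def a_def rate_I_def by (rule SUP_upper2) simp
      qed
      have Teq: "eventually (\<lambda>n. T n = ereal (t * (Q0 \<bullet> Q2n n) - ln (enn2real (a n)))) sequentially"
        using ev_fin ev_pos
      proof eventually_elim
        case (elim n)
        then have "a n = ennreal (enn2real (a n))" "enn2real (a n) > 0"
          by (auto simp: less_top enn2real_positive_iff)
        moreover have "a n \<noteq> 0" "a n \<noteq> \<infinity>" using elim by auto
        ultimately show ?case unfolding T_def ereal_log_def
          by (simp add: trace_inner)
      qed
      have r: "(\<lambda>n. t * (Q0 \<bullet> Q2n n) - ln (enn2real (a n))) \<longlonglongrightarrow> t * (Q0 \<bullet> Q2) - ln \<alpha>"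
        using alpos by (intro tendsto_diff tendsto_mult tendsto_const tendsto_inner conv2 tendsto_ln rconv) simp
      have "((\<lambda>n. ereal (t * (Q0 \<bullet> Q2n n) - ln (enn2real (a n)))) \<longlongrightarrow> ereal (t * (Q0 \<bullet> Q2) - ln \<alpha>)) sequentially"
        using r by simp
      then have Tconv: "T \<longlonglongrightarrow> ereal (t * (Q0 \<bullet> Q2) - ln \<alpha>)"
        using Teq by (rule Lim_transform_eventually[OF _ eventually_mono]) simp
      have "ereal (t * (Q0 \<bullet> Q2) - ln \<alpha>) = liminf T"
        using Tconv by (simp add: lim_imp_Liminf)
      also have "\<dots> \<le> L" unfolding L_def by (intro Liminf_mono) (simp add: Tle)
      finally have "ereal (t * (Q0 \<bullet> Q2) - ln \<alpha>) \<le> L" .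
      moreover have "g t \<le> t * (Q0 \<bullet> Q2) - ln \<alpha>"
        using alle alpos unfolding g_def by simp
      then have "ereal (g t) \<le> ereal (t * (Q0 \<bullet> Q2) - ln \<alpha>)" by simp
      ultimately show ?thesis by (rule order_trans[rotated])
    qed
    have gconv: "(g \<longlongrightarrow> Q0 \<bullet> Q2 - ln m) (at_left 1)"
    proof -
      have "(g \<longlongrightarrow> 1 * (Q0 \<bullet> Q2) - ln (1 * m + (1 - 1) * \<mu>r)) (at_left 1)"
        unfolding g_def using mpos by (intro tendsto_intros) auto
      then show ?thesis by simp
    qed
    have "ereal (Q0 \<bullet> Q2 - ln m) \<le> L"
    proof (rule tendsto_le[OF trivial_limit_at_left_real tendsto_const])
      show "((\<lambda>t. ereal (g t)) \<longlongrightarrow> ereal (Q0 \<bullet> Q2 - ln m)) (at_left (1::real))"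
        using gconv by simp
      have ev: "eventually (\<lambda>x. x \<in> {0<..<(1::real)}) (at_left 1)"
        by (rule eventually_at_left_real) simp
      show "eventually (\<lambda>t. ereal (g t) \<le> L) (at_left (1::real))"
      proof (rule eventually_mono[OF ev])
        fix x :: real assume "x \<in> {0<..<1}"
        then show "ereal (g x) \<le> L" by (intro gle) auto
      qed
    qed
    then show ?thesis using lhs unfolding L_def by simp
  qed
qed

theorem mainTheorem15:
  fixes G :: "real^'d \<Rightarrow> real^'e^'e"
    and Q1n :: "nat \<Rightarrow> real^'d^'d" and Q2n :: "nat \<Rightarrow> real^'e^'e"
    and Q1 :: "real^'d^'d" and Q2 :: "real^'e^'e"
  assumes G_psd: "\<And>z. G z \<in> psd_mats"
    and G_lip: "asym_quad_lipschitz G"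
    and Q1n_psd: "\<And>n. Q1n n \<in> psd_mats" and Q2n_sym: "\<And>n. Q2n n \<in> sym_mats"
    and Q1_psd: "Q1 \<in> psd_mats" and Q2_sym: "Q2 \<in> sym_mats"
    and conv1: "Q1n \<longlonglongrightarrow> Q1" and conv2: "Q2n \<longlonglongrightarrow> Q2"
  shows "liminf (\<lambda>n. rate_I G (Q2n n) (Q1n n)) \<ge> rate_I G Q2 Q1"
proof -
  have "rate_I G Q2 Q1 = (SUP Q0\<in>sym_mats. ereal (trace (transpose Q0 ** Q2)) - ereal_log (mgf_M G Q0 Q1))"
    by (rule rate_I_def)
  also have "\<dots> \<le> liminf (\<lambda>n. rate_I G (Q2n n) (Q1n n))"
    by (rule SUP_least) (rule term_le_liminf[OF G_lip Q1n_psd Q1_psd conv1 conv2])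
  finally show ?thesis .
qed

end
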